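(* Let $a \ge 1$ and $1 \le k \le a$ be integers. There exist a finite directed graph $H$, vertices $p,q$ of $H$, an incoming arc $e_{in}$ ending at $p$ and an outgoing arc $e_{out}$ starting at $q$ (with their other endpoints outside $H$), such that every vertex of $H$ has in-degree plus out-degree at most $4$ when $e_{in}, e_{out}$ are counted, and for every nonnegative integer $t$ the following are equivalent: (1) $k \le t \le a$; (2) when $e_{in}$ and $e_{out}$ both receive label $t$, there is an assignment of nonnegative integer labels to the arcs of $H$ such that for every vertex $v$ of $H$ the sum of labels on arcs entering $v$ and the sum of labels on arcs leaving $v$ (including $e_{in}$ and $e_{out}$) are both equal to $a$, and every vertex of $H$ is connected to $p$ via arcs of $H$ with positive label (ignoring directions). *)

theory Defs
  imports Main
begin

text \<open>The two external arcs e_in (ending at p) and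
  e_out (starting at q) are not arcs of H; they are accounted for explicitly.\<close>

definition digraph_H :: "nat set \<Rightarrow> nat set \<Rightarrow> (nat \<Rightarrow> nat) \<Rightarrow> (nat \<Rightarrow> nat) \<Rightarrow> bool" where
  "digraph_H V A src tgt \<longleftrightarrow> finite V \<and> finite A \<and>
     (\<forall>e\<in>A. src e \<in> V \<and> tgt e \<in> V \<and> src e \<noteq> tgt e)"

definition in_arcs :: "nat set \<Rightarrow> (nat \<Rightarrow> nat) \<Rightarrow> nat \<Rightarrow> nat set" where
  "in_arcs A tgt v = {e \<in> A. tgt e = v}"

definition out_arcs :: "nat set \<Rightarrow> (nat \<Rightarrow> nat) \<Rightarrow> nat \<Rightarrow> nat set" where
  "out_arcs A src v = {e \<in> A. src e = v}"

definition total_degree :: "nat set \<Rightarrow> (nat \<Rightarrow> nat) \<Rightarrow> (nat \<Rightarrow> nat) \<Rightarrow> nat \<Rightarrow> nat \<Rightarrow> nat \<Rightarrow> nat" where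
  "total_degree A src tgt p q v =
     card (in_arcs A tgt v) + card (out_arcs A src v)
     + (if v = p then 1 else 0) + (if v = q then 1 else 0)"

definition pos_adj :: "nat set \<Rightarrow> (nat \<Rightarrow> nat) \<Rightarrow> (nat \<Rightarrow> nat) \<Rightarrow> (nat \<Rightarrow> nat) \<Rightarrow> (nat \<times> nat) set" where
  "pos_adj A src tgt f = {(src e, tgt e) | e. e \<in> A \<and> f e > 0} \<union> {(tgt e, src e) | e. e \<in> A \<and> f e > 0}"

definition valid_labelling :: "nat set \<Rightarrow> nat set \<Rightarrow> (nat \<Rightarrow> nat) \<Rightarrow> (nat \<Rightarrow> nat) \<Rightarrow> nat \<Rightarrow> nat
     \<Rightarrow> nat \<Rightarrow> nat \<Rightarrow> (nat \<Rightarrow> nat) \<Rightarrow> bool" where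
  "valid_labelling V A src tgt p q a t f \<longleftrightarrow>
     (\<forall>v\<in>V. (\<Sum>e\<in>in_arcs A tgt v. f e) + (if v = p then t else 0) = a
           \<and> (\<Sum>e\<in>out_arcs A src v. f e) + (if v = q then t else 0) = a)
     \<and> (\<forall>v\<in>V. (v, p) \<in> (pos_adj A src tgt f)\<^sup>*)"

end

theory Submission
  imports Defs
begin


definition vtx :: "nat \<Rightarrow> nat \<Rightarrow> nat" where "vtx j r = 6*j + r"
definition arc :: "nat \<Rightarrow> nat \<Rightarrow> nat" where "arc i s = 10*i + s"

lemma vtx_inj: "r < 6 \<Longrightarrow> r' < 6 \<Longrightarrow> vtx i r = vtx j r' \<longleftrightarrow> i = j \<and> r = r'"
proof -
  assume a: "r < 6" "r' < 6"
  have "(6*i+r) div 6 = i" "(6*i+r) mod 6 = r" "(6*j+r') div 6 = j" "(6*j+r') mod 6 = r'"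
    using a by simp_all
  then show ?thesis unfolding vtx_def by metis
qed

lemma arc_inj: "r < 10 \<Longrightarrow> r' < 10 \<Longrightarrow> arc i r = arc j r' \<longleftrightarrow> i = j \<and> r = r'"
proof -
  assume a: "r < 10" "r' < 10"
  have "(10*i+r) div 10 = i" "(10*i+r) mod 10 = r" "(10*j+r') div 10 = j" "(10*j+r') mod 10 = r'"
    using a by simp_all
  then show ?thesis unfolding arc_def by metis
qed

definition gV :: "nat \<Rightarrow> nat set" where "gV k = {v. v < 6*k}"
definition gA :: "nat \<Rightarrow> nat set" where "gA k = {e. e < 10*k \<and> (8 \<le> e mod 10 \<longrightarrow> 10 \<le> e)}"
definition gsrcF :: "nat \<Rightarrow> nat \<Rightarrow> nat" where "gsrcF j s = (
  if s = 0 then vtx j 0 else if s = 1 then vtx j 1 else if s=2 then vtx j 1 else if s=3 then vtx j 2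
  else if s=4 then vtx j 3 else if s=5 then vtx j 3 else if s=6 then vtx j 4 else if s=7 then vtx j 5
  else if s=8 then vtx j 1 else vtx (j-1) 5)"
definition gtgtF :: "nat \<Rightarrow> nat \<Rightarrow> nat" where "gtgtF j s = (
  if s = 0 then vtx j 1 else if s = 1 then vtx j 0 else if s=2 then vtx j 2 else if s=3 then vtx j 3
  else if s=4 then vtx j 2 else if s=5 then vtx j 4 else if s=6 then vtx j 5 else if s=7 then vtx j 4
  else if s=8 then vtx (j-1) 0 else vtx j 4)"
definition gsrc :: "nat \<Rightarrow> nat" where "gsrc e = gsrcF (e div 10) (e mod 10)"
definition gtgt :: "nat \<Rightarrow> nat" where "gtgt e = gtgtF (e div 10) (e mod 10)"

lemma gsrc_eq: "c < 10 \<Longrightarrow> gsrc (arc i c) = gsrcF i c" by (simp add: gsrc_def arc_def)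
lemma gtgt_eq: "c < 10 \<Longrightarrow> gtgt (arc i c) = gtgtF i c" by (simp add: gtgt_def arc_def)

lemma g_simps:
  "gsrc (arc i 0) = vtx i 0" "gsrc (arc i 1) = vtx i 1" "gsrc (arc i 2) = vtx i 1" "gsrc (arc i 3) = vtx i 2"
  "gsrc (arc i 4) = vtx i 3" "gsrc (arc i 5) = vtx i 3" "gsrc (arc i 6) = vtx i 4" "gsrc (arc i 7) = vtx i 5"
  "gsrc (arc i 8) = vtx i 1" "gsrc (arc i 9) = vtx (i-1) 5"
  "gtgt (arc i 0) = vtx i 1" "gtgt (arc i 1) = vtx i 0" "gtgt (arc i 2) = vtx i 2" "gtgt (arc i 3) = vtx i 3"
  "gtgt (arc i 4) = vtx i 2" "gtgt (arc i 5) = vtx i 4" "gtgt (arc i 6) = vtx i 5" "gtgt (arc i 7) = vtx i 4"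
  "gtgt (arc i 8) = vtx (i-1) 0" "gtgt (arc i 9) = vtx i 4"
  by (simp_all add: gsrc_eq gtgt_eq gsrcF_def gtgtF_def)

lemma gA_mem: "arc i s \<in> gA k \<longleftrightarrow> (i < k \<and> (8 \<le> s \<longrightarrow> 1 \<le> i))" if "s < 10"
proof -
  have m: "(10*i+s) mod 10 = s" using that by simp
  have "10*i+s < 10*k \<longleftrightarrow> i < k" using that by linarith
  moreover have "10 \<le> 10*i+s \<longleftrightarrow> 1 \<le> i" using that by linarith
  ultimately show ?thesis unfolding gA_def mem_Collect_eq m arc_def by blast
qed

lemma lt10: "s < (10::nat) \<Longrightarrow> s=0 \<or> s=1 \<or> s=2 \<or> s=3 \<or> s=4 \<or> s=5 \<or> s=6 \<or> s=7 \<or> s=8 \<or> s=9"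
  by presburger

lemma arc_split: "e \<in> gA k \<Longrightarrow> \<exists>i<k. e = arc i 0 \<or> e = arc i 1 \<or> e = arc i 2 \<or> e = arc i 3 \<or> e = arc i 4
   \<or> e = arc i 5 \<or> e = arc i 6 \<or> e = arc i 7 \<or> (1 \<le> i \<and> (e = arc i 8 \<or> e = arc i 9))"
proof -
  assume "e \<in> gA k"
  define i where "i = e div 10"
  define s where "s = e mod 10"
  have e: "e = arc i s" unfolding i_def s_def arc_def by simp
  have s: "s < 10" unfolding s_def by simp
  have "i < k \<and> (8 \<le> s \<longrightarrow> 1 \<le> i)" using gA_mem[OF s, of i k] \<open>e \<in> gA k\<close> e by simp
  then show ?thesis using lt10[OF s] e by (intro exI[of _ i]) auto
qed

lemma gV_mem: "vtx j r \<in> gV k \<longleftrightarrow> j < k" if "r < 6"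
  using that unfolding gV_def vtx_def by auto


lemmas gs = g_simps g_simps[simplified]

lemma in0: "j < k \<Longrightarrow> in_arcs (gA k) gtgt (vtx j 0) = {arc j 1} \<union> (if j+1<k then {arc (j+1) 8} else {})"
  by (rule set_eqI, rule iffI,
   (simp add: in_arcs_def out_arcs_def, elim conjE, drule arc_split, elim exE conjE disjE;
     auto simp: gs vtx_inj arc_inj),
   auto simp: in_arcs_def out_arcs_def gs gA_mem split: if_splits)
lemma in1: "j < k \<Longrightarrow> in_arcs (gA k) gtgt (vtx j 1) = {arc j 0}" by (rule set_eqI, rule iffI,
   (simp add: in_arcs_def out_arcs_def, elim conjE, drule arc_split, elim exE conjE disjE;
     auto simp: gs vtx_inj arc_inj),
   auto simp: in_arcs_def out_arcs_def gs gA_mem split: if_splits)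
lemma in2: "j < k \<Longrightarrow> in_arcs (gA k) gtgt (vtx j 2) = {arc j 2, arc j 4}" by (rule set_eqI, rule iffI,
   (simp add: in_arcs_def out_arcs_def, elim conjE, drule arc_split, elim exE conjE disjE;
     auto simp: gs vtx_inj arc_inj),
   auto simp: in_arcs_def out_arcs_def gs gA_mem split: if_splits)
lemma in3: "j < k \<Longrightarrow> in_arcs (gA k) gtgt (vtx j 3) = {arc j 3}" by (rule set_eqI, rule iffI,
   (simp add: in_arcs_def out_arcs_def, elim conjE, drule arc_split, elim exE conjE disjE;
     auto simp: gs vtx_inj arc_inj),
   auto simp: in_arcs_def out_arcs_def gs gA_mem split: if_splits)
lemma in4: "j < k \<Longrightarrow> in_arcs (gA k) gtgt (vtx j 4) = {arc j 5, arc j 7} \<union> (if 1 \<le> j then {arc j 9} else {})" by (rule set_eqI, rule iffI,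
   (simp add: in_arcs_def out_arcs_def, elim conjE, drule arc_split, elim exE conjE disjE;
     auto simp: gs vtx_inj arc_inj),
   auto simp: in_arcs_def out_arcs_def gs gA_mem split: if_splits)
lemma in5: "j < k \<Longrightarrow> in_arcs (gA k) gtgt (vtx j 5) = {arc j 6}" by (rule set_eqI, rule iffI,
   (simp add: in_arcs_def out_arcs_def, elim conjE, drule arc_split, elim exE conjE disjE;
     auto simp: gs vtx_inj arc_inj),
   auto simp: in_arcs_def out_arcs_def gs gA_mem split: if_splits)
lemma out0: "j < k \<Longrightarrow> out_arcs (gA k) gsrc (vtx j 0) = {arc j 0}" by (rule set_eqI, rule iffI,
   (simp add: in_arcs_def out_arcs_def, elim conjE, drule arc_split, elim exE conjE disjE;
     auto simp: gs vtx_inj arc_inj),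
   auto simp: in_arcs_def out_arcs_def gs gA_mem split: if_splits)
lemma out1: "j < k \<Longrightarrow> out_arcs (gA k) gsrc (vtx j 1) = {arc j 1, arc j 2} \<union> (if 1 \<le> j then {arc j 8} else {})" by (rule set_eqI, rule iffI,
   (simp add: in_arcs_def out_arcs_def, elim conjE, drule arc_split, elim exE conjE disjE;
     auto simp: gs vtx_inj arc_inj),
   auto simp: in_arcs_def out_arcs_def gs gA_mem split: if_splits)
lemma out2: "j < k \<Longrightarrow> out_arcs (gA k) gsrc (vtx j 2) = {arc j 3}" by (rule set_eqI, rule iffI,
   (simp add: in_arcs_def out_arcs_def, elim conjE, drule arc_split, elim exE conjE disjE;
     auto simp: gs vtx_inj arc_inj),
   auto simp: in_arcs_def out_arcs_def gs gA_mem split: if_splits)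
lemma out3: "j < k \<Longrightarrow> out_arcs (gA k) gsrc (vtx j 3) = {arc j 4, arc j 5}" by (rule set_eqI, rule iffI,
   (simp add: in_arcs_def out_arcs_def, elim conjE, drule arc_split, elim exE conjE disjE;
     auto simp: gs vtx_inj arc_inj),
   auto simp: in_arcs_def out_arcs_def gs gA_mem split: if_splits)
lemma out4: "j < k \<Longrightarrow> out_arcs (gA k) gsrc (vtx j 4) = {arc j 6}" by (rule set_eqI, rule iffI,
   (simp add: in_arcs_def out_arcs_def, elim conjE, drule arc_split, elim exE conjE disjE;
     auto simp: gs vtx_inj arc_inj),
   auto simp: in_arcs_def out_arcs_def gs gA_mem split: if_splits)
lemma out5: "j < k \<Longrightarrow> out_arcs (gA k) gsrc (vtx j 5) = {arc j 7} \<union> (if j+1<k then {arc (j+1) 9} else {})" by (rule set_eqI, rule iffI,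
   (simp add: in_arcs_def out_arcs_def, elim conjE, drule arc_split, elim exE conjE disjE;
     auto simp: gs vtx_inj arc_inj),
   auto simp: in_arcs_def out_arcs_def gs gA_mem split: if_splits)


lemma lt6: "s < (6::nat) \<Longrightarrow> s=0 \<or> s=1 \<or> s=2 \<or> s=3 \<or> s=4 \<or> s=5"
  by presburger

lemma vtx_split: "v \<in> gV k \<Longrightarrow> \<exists>j<k. v = vtx j 0 \<or> v = vtx j 1 \<or> v = vtx j 2 \<or> v = vtx j 3
   \<or> v = vtx j 4 \<or> v = vtx j 5"
proof -
  assume "v \<in> gV k"
  define i where "i = v div 6"
  define s where "s = v mod 6"
  have e: "v = vtx i s" unfolding i_def s_def vtx_def by simp
  have s: "s < 6" unfolding s_def by simp
  have "i < k" using gV_mem[OF s, of i k] \<open>v \<in> gV k\<close> e by simp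
  then show ?thesis using lt6[OF s] e by (intro exI[of _ i]) auto
qed

definition cc :: "nat \<Rightarrow> nat \<Rightarrow> nat \<Rightarrow> nat" where "cc k t j = t + 1 + j - k"
definition dd :: "nat \<Rightarrow> nat \<Rightarrow> nat \<Rightarrow> nat" where "dd k t j = (if j = 0 then t + 1 - k else 1)"
definition labF :: "nat \<Rightarrow> nat \<Rightarrow> nat \<Rightarrow> nat \<Rightarrow> nat \<Rightarrow> nat" where
  "labF a k t i s = (if s=0 then a else if s=1 then a - cc k t i else if s=2 then dd k t i
     else if s=3 then a else if s=4 then a - dd k t i else if s=5 then dd k t i else if s=6 then a
     else if s=7 then a - cc k t i else cc k t (i-1))"
definition lab :: "nat \<Rightarrow> nat \<Rightarrow> nat \<Rightarrow> nat \<Rightarrow> nat" where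
  "lab a k t e = labF a k t (e div 10) (e mod 10)"

lemma lab_eq: "c < 10 \<Longrightarrow> lab a k t (arc i c) = labF a k t i c" by (simp add: lab_def arc_def)

lemma lab_simps:
  "lab a k t (arc i 0) = a" "lab a k t (arc i 1) = a - cc k t i" "lab a k t (arc i 2) = dd k t i"
  "lab a k t (arc i 3) = a" "lab a k t (arc i 4) = a - dd k t i" "lab a k t (arc i 5) = dd k t i"
  "lab a k t (arc i 6) = a" "lab a k t (arc i 7) = a - cc k t i" "lab a k t (arc i 8) = cc k t (i-1)"
  "lab a k t (arc i 9) = cc k t (i-1)"
  by (simp_all add: lab_eq labF_def)

lemmas ls = lab_simps lab_simps[simplified]
lemmas ios = in0 in1 in2 in3 in4 in5 out0 out1 out2 out3 out4 out5
lemmas ios' = ios[simplified]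

lemma forward_sums:
  assumes "1 \<le> k" "k \<le> t" "t \<le> a" "v \<in> gV k"
  shows "(\<Sum>e\<in>in_arcs (gA k) gtgt v. lab a k t e) + (if v = vtx (k-1) 0 then t else 0) = a
       \<and> (\<Sum>e\<in>out_arcs (gA k) gsrc v. lab a k t e) + (if v = vtx (k-1) 5 then t else 0) = a"
proof -
  obtain j where j: "j < k" and v: "v = vtx j 0 \<or> v = vtx j 1 \<or> v = vtx j 2 \<or> v = vtx j 3
   \<or> v = vtx j 4 \<or> v = vtx j 5" using vtx_split[OF assms(4)] by blast
  have c1: "cc k t j \<le> a" "1 \<le> cc k t j" "dd k t j \<le> cc k t j" "1 \<le> dd k t j"
    using j assms unfolding cc_def dd_def by auto
  have c2: "1 \<le> j \<Longrightarrow> cc k t j = dd k t j + cc k t (j-1)" "j = 0 \<Longrightarrow> cc k t j = dd k t j"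
    using j assms unfolding cc_def dd_def by auto
  have c3: "j = k - 1 \<Longrightarrow> cc k t j = t" using j assms unfolding cc_def by auto
  have c4: "cc k t (j + 1 - 1) = cc k t j" by simp
  from v show ?thesis
    using j c1 c2 c3 assms
    by (cases "j = 0"; elim disjE; auto simp: ios ios' ls arc_inj vtx_inj)
qed



lemma pos_edge: "e \<in> A \<Longrightarrow> 0 < f e \<Longrightarrow> (src e, tgt e) \<in> pos_adj A src tgt f \<and> (tgt e, src e) \<in> pos_adj A src tgt f"
  unfolding pos_adj_def by blast

lemma fwd_conn:
  assumes "1 \<le> k" "k \<le> t" "t \<le> a" "v \<in> gV k"
  shows "(v, vtx (k-1) 0) \<in> (pos_adj (gA k) gsrc gtgt (lab a k t))\<^sup>*"
proof -
  let ?R = "pos_adj (gA k) gsrc gtgt (lab a k t)"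
  have cpos: "j < k \<Longrightarrow> 0 < cc k t j" for j using assms unfolding cc_def by auto
  have dpos: "j < k \<Longrightarrow> 0 < dd k t j" for j using assms unfolding dd_def by auto
  have apos: "0 < a" using assms by auto
  have E: "\<And>s i. s < 10 \<Longrightarrow> arc i s \<in> gA k \<Longrightarrow> 0 < lab a k t (arc i s) \<Longrightarrow>
     (gsrc (arc i s), gtgt (arc i s)) \<in> ?R \<and> (gtgt (arc i s), gsrc (arc i s)) \<in> ?R"
    by (rule pos_edge)
  have up: "j + 1 < k \<Longrightarrow> (vtx j 0, vtx (j+1) 0) \<in> ?R\<^sup>*" for j
  proof -
    assume j: "j + 1 < k"
    have "(vtx j 0, vtx (j+1) 1) \<in> ?R"
      using E[of 8 "j+1"] j cpos[of j] by (simp add: gA_mem ls gs)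
    moreover have "(vtx (j+1) 1, vtx (j+1) 0) \<in> ?R"
      using E[of 0 "j+1"] j apos by (simp add: gA_mem ls gs)
    ultimately show ?thesis by (meson converse_rtrancl_into_rtrancl r_into_rtrancl)
  qed
  have top: "\<forall>j. j + m = k - 1 \<longrightarrow> (vtx j 0, vtx (k-1) 0) \<in> ?R\<^sup>*" for m
  proof (induction m)
    case 0 then show ?case by simp
  next
    case (Suc m)
    show ?case
    proof (intro allI impI)
      fix j assume h: "j + Suc m = k - 1"
      then have "(vtx (j+1) 0, vtx (k-1) 0) \<in> ?R\<^sup>*" using Suc by auto
      moreover have "(vtx j 0, vtx (j+1) 0) \<in> ?R\<^sup>*" using up[of j] h by auto
      ultimately show "(vtx j 0, vtx (k-1) 0) \<in> ?R\<^sup>*" by (meson rtrancl_trans)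
    qed
  qed
  obtain j where j: "j < k" and v: "v = vtx j 0 \<or> v = vtx j 1 \<or> v = vtx j 2 \<or> v = vtx j 3
   \<or> v = vtx j 4 \<or> v = vtx j 5" using vtx_split[OF assms(4)] by blast
  have r0: "(vtx j 0, vtx (k-1) 0) \<in> ?R\<^sup>*" using top[of "k - 1 - j"] j by auto
  have r1: "(vtx j 1, vtx j 0) \<in> ?R" using E[of 0 j] j apos by (simp add: gA_mem ls gs)
  have r2: "(vtx j 2, vtx j 1) \<in> ?R" using E[of 2 j] j dpos[of j] by (simp add: gA_mem ls gs)
  have r3: "(vtx j 3, vtx j 2) \<in> ?R" using E[of 3 j] j apos by (simp add: gA_mem ls gs)
  have r4: "(vtx j 4, vtx j 3) \<in> ?R" using E[of 5 j] j dpos[of j] by (simp add: gA_mem ls gs)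
  have r5: "(vtx j 5, vtx j 4) \<in> ?R" using E[of 6 j] j apos by (simp add: gA_mem ls gs)
  from v show ?thesis
    using r0 r1 r2 r3 r4 r5 by (meson converse_rtrancl_into_rtrancl)
qed

lemma degree_ok:
  assumes "1 \<le> k" "v \<in> gV k"
  shows "total_degree (gA k) gsrc gtgt (vtx (k-1) 0) (vtx (k-1) 5) v \<le> 4"
proof -
  obtain j where j: "j < k" and v: "v = vtx j 0 \<or> v = vtx j 1 \<or> v = vtx j 2 \<or> v = vtx j 3
   \<or> v = vtx j 4 \<or> v = vtx j 5" using vtx_split[OF assms(2)] by blast
  from v show ?thesis unfolding total_degree_def
    using j assms by (elim disjE; auto simp: ios ios' arc_inj vtx_inj)
qed

lemma digraph_ok: "digraph_H (gV k) (gA k) gsrc gtgt"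
proof -
  have "finite (gV k)" unfolding gV_def by simp
  moreover have "finite (gA k)" unfolding gA_def by (rule finite_subset[of _ "{..<10*k}"]) auto
  moreover have "\<forall>e\<in>gA k. gsrc e \<in> gV k \<and> gtgt e \<in> gV k \<and> gsrc e \<noteq> gtgt e"
  proof
    fix e assume "e \<in> gA k"
    from arc_split[OF this] obtain i where "i < k" and
      "e = arc i 0 \<or> e = arc i 1 \<or> e = arc i 2 \<or> e = arc i 3 \<or> e = arc i 4
   \<or> e = arc i 5 \<or> e = arc i 6 \<or> e = arc i 7 \<or> (1 \<le> i \<and> (e = arc i 8 \<or> e = arc i 9))" by blast
    then show "gsrc e \<in> gV k \<and> gtgt e \<in> gV k \<and> gsrc e \<noteq> gtgt e"
      by (elim disjE conjE; simp add: gs gV_mem vtx_inj)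
  qed
  ultimately show ?thesis unfolding digraph_H_def by blast
qed



lemma backward:
  assumes k1: "1 \<le> k" and val: "valid_labelling (gV k) (gA k) gsrc gtgt (vtx (k-1) 0) (vtx (k-1) 5) a t f"
  shows "k \<le> t \<and> t \<le> a"
proof -
  let ?P = "vtx (k-1) 0"
  let ?R = "pos_adj (gA k) gsrc gtgt f"
  have ins: "\<And>v. v \<in> gV k \<Longrightarrow> (\<Sum>e\<in>in_arcs (gA k) gtgt v. f e) + (if v = ?P then t else 0) = a"
    and outs: "\<And>v. v \<in> gV k \<Longrightarrow> (\<Sum>e\<in>out_arcs (gA k) gsrc v. f e) + (if v = vtx (k-1) 5 then t else 0) = a"
    and conn: "\<And>v. v \<in> gV k \<Longrightarrow> (v, ?P) \<in> ?R\<^sup>*"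
    using val unfolding valid_labelling_def by auto
  have eqp: "f (arc j 1) + (if j+1<k then f (arc (j+1) 8) else 0) + (if j = k - 1 then t else 0) = a"
    if j: "j < k" for j
    using ins[of "vtx j 0"] j by (cases "j+1<k"; auto simp: ios ios' arc_inj vtx_inj gV_mem)
  have eqv: "f (arc j 1) + f (arc j 2) + (if 1 \<le> j then f (arc j 8) else 0) = a"
    if j: "j < k" for j
    using outs[of "vtx j 1"] j by (cases "1 \<le> j"; auto simp: ios ios' arc_inj vtx_inj gV_mem)
  have eq2i: "f (arc j 2) + f (arc j 4) = a" if j: "j < k" for j
    using ins[of "vtx j 2"] j by (auto simp: ios ios' arc_inj vtx_inj gV_mem)
  have eq2o: "f (arc j 3) = a" if j: "j < k" for j
    using outs[of "vtx j 2"] j by (auto simp: ios ios' arc_inj vtx_inj gV_mem)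
  have eq3o: "f (arc j 4) + f (arc j 5) = a" if j: "j < k" for j
    using outs[of "vtx j 3"] j by (auto simp: ios ios' arc_inj vtx_inj gV_mem)
  have dpos: "0 < f (arc j 2)" if j: "j < k" for j
  proof (rule ccontr)
    assume "\<not> 0 < f (arc j 2)"
    then have z2: "f (arc j 2) = 0" by simp
    then have z5: "f (arc j 5) = 0" using eq2i[OF j] eq3o[OF j] by simp
    let ?S = "{vtx j 2, vtx j 3}"
    have cl: "y \<in> ?S" if xy: "(x, y) \<in> ?R" and x: "x \<in> ?S" for x y
    proof -
      obtain e where e: "e \<in> gA k" "0 < f e" and
        c: "(x = gsrc e \<and> y = gtgt e) \<or> (x = gtgt e \<and> y = gsrc e)"
        using xy unfolding pos_adj_def by blast
      have o2: "gsrc e = vtx j 2 \<Longrightarrow> e = arc j 3"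
        using out2[OF j] e(1) unfolding out_arcs_def by blast
      have o3: "gsrc e = vtx j 3 \<Longrightarrow> e = arc j 4 \<or> e = arc j 5"
        using out3[OF j] e(1) unfolding out_arcs_def by blast
      have i2: "gtgt e = vtx j 2 \<Longrightarrow> e = arc j 2 \<or> e = arc j 4"
        using in2[OF j] e(1) unfolding in_arcs_def by blast
      have i3: "gtgt e = vtx j 3 \<Longrightarrow> e = arc j 3"
        using in3[OF j] e(1) unfolding in_arcs_def by blast
      have xs: "x = vtx j 2 \<or> x = vtx j 3" using x by simp
      from c show ?thesis
      proof
        assume h: "x = gsrc e \<and> y = gtgt e"
        from xs show ?thesis
        proof
          assume "x = vtx j 2"
          then have "e = arc j 3" using o2 h by simp
          then show ?thesis using h by (simp add: gs)
        next
          assume "x = vtx j 3"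
          then have "e = arc j 4 \<or> e = arc j 5" using o3 h by simp
          then have "e = arc j 4" using z5 e(2) by auto
          then show ?thesis using h by (simp add: gs)
        qed
      next
        assume h: "x = gtgt e \<and> y = gsrc e"
        from xs show ?thesis
        proof
          assume "x = vtx j 2"
          then have "e = arc j 2 \<or> e = arc j 4" using i2 h by simp
          then have "e = arc j 4" using z2 e(2) by auto
          then show ?thesis using h by (simp add: gs)
        next
          assume "x = vtx j 3"
          then have "e = arc j 3" using i3 h by simp
          then show ?thesis using h by (simp add: gs)
        qed
      qed
    qed
    have "(vtx j 2, ?P) \<in> ?R\<^sup>*" using conn[of "vtx j 2"] j by (simp add: gV_mem)
    then have "?P \<in> ?S"
    proof (induction rule: rtrancl_induct)
      case base then show ?case by simp
    next
      case (step y z) then show ?case using cl by blast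
    qed
    then show False by (simp add: vtx_inj)
  qed
  define C where "C j = (if j+1<k then f (arc (j+1) 8) else t)" for j
  have Cj: "C j = f (arc j 2) + (if 1 \<le> j then C (j-1) else 0)" if j: "j < k" for j
  proof -
    have "f (arc j 1) + C j = a" using eqp[OF j] j unfolding C_def by (cases "j+1<k") auto
    moreover have "1 \<le> j \<Longrightarrow> C (j-1) = f (arc j 8)" using j unfolding C_def by auto
    ultimately show ?thesis using eqv[OF j] by (cases "1 \<le> j") auto
  qed
  have ge: "j < k \<longrightarrow> j + 1 \<le> C j" for j
  proof (induction j)
    case 0 then show ?case using Cj[of 0] dpos[of 0] by auto
  next
    case (Suc j) then show ?case using Cj[of "Suc j"] dpos[of "Suc j"] by auto
  qed
  have "C (k-1) = t" unfolding C_def using k1 by auto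
  then have "k \<le> t" using ge[of "k-1"] k1 by auto
  moreover have "t \<le> a" using eqp[of "k-1"] k1 by auto
  ultimately show ?thesis by simp
qed


theorem lemma4p5:
  fixes a k :: nat
  assumes "1 \<le> a" and "1 \<le> k" and "k \<le> a"
  shows "\<exists>(V::nat set) (A::nat set) (src::nat \<Rightarrow> nat) (tgt::nat \<Rightarrow> nat) p q.
           digraph_H V A src tgt \<and> p \<in> V \<and> q \<in> V \<and>
           (\<forall>v\<in>V. total_degree A src tgt p q v \<le> 4) \<and>
           (\<forall>t::nat. (k \<le> t \<and> t \<le> a) \<longleftrightarrow>
                     (\<exists>f::nat \<Rightarrow> nat. valid_labelling V A src tgt p q a t f))"
proof -
  have p: "vtx (k-1) 0 \<in> gV k" and q: "vtx (k-1) 5 \<in> gV k" using assms by (simp_all add: gV_mem)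
  have deg: "\<forall>v\<in>gV k. total_degree (gA k) gsrc gtgt (vtx (k-1) 0) (vtx (k-1) 5) v \<le> 4"
    using degree_ok assms by blast
  have eqv: "\<forall>t::nat. (k \<le> t \<and> t \<le> a) \<longleftrightarrow>
        (\<exists>f::nat \<Rightarrow> nat. valid_labelling (gV k) (gA k) gsrc gtgt (vtx (k-1) 0) (vtx (k-1) 5) a t f)"
  proof (intro allI iffI)
    fix t assume t: "k \<le> t \<and> t \<le> a"
    have "valid_labelling (gV k) (gA k) gsrc gtgt (vtx (k-1) 0) (vtx (k-1) 5) a t (lab a k t)"
      unfolding valid_labelling_def using forward_sums fwd_conn assms t by blast
    then show "\<exists>f. valid_labelling (gV k) (gA k) gsrc gtgt (vtx (k-1) 0) (vtx (k-1) 5) a t f" by blast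
  next
    fix t assume "\<exists>f. valid_labelling (gV k) (gA k) gsrc gtgt (vtx (k-1) 0) (vtx (k-1) 5) a t f"
    then show "k \<le> t \<and> t \<le> a" using backward assms by blast
  qed
  show ?thesis using digraph_ok p q deg eqv by blast
qed

end
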